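(* Let $\Lambda$ be any lattice in $\mathbb{E}^3$ whose shortest non-zero vector has length $2$. Then for every $n\ge 1$, $C_\Lambda(n)\le C_{fcc}(n)$. More precisely, there is a map $f:\Lambda\to\Lambda_{fcc}$ of the form $f(\alpha\mathbf{v}_1+\beta\mathbf{v}_2+\gamma\mathbf{v}_3)=\alpha\mathbf{w}_1+\beta\mathbf{w}_2+\gamma\mathbf{w}_3$ ($\alpha,\beta,\gamma\in\mathbb{Z}$), for suitable integral bases $\mathbf{v}_1,\mathbf{v}_2,\mathbf{v}_3$ of $\Lambda$ and $\mathbf{w}_1,\mathbf{w}_2,\mathbf{w}_3$ of $\Lambda_{fcc}$, such that $\mathrm{dist}(\mathbf{x},\mathbf{y})=2$ implies $\mathrm{dist}(f(\mathbf{x}),f(\mathbf{y}))=2$ for all $\mathbf{x},\mathbf{y}\in\Lambda$.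
   Context: A lattice in $\mathbb{E}^3$ is the set of integer linear combinations of three linearly independent vectors. $\Lambda_{fcc}$ is the face-centered cubic lattice with shortest non-zero vector of length $2$. For a lattice $L$, $C_L(n)$ is the largest number of touching pairs (centers at distance $2$) among packings of $n$ unit balls (pairwise disjoint interiors) with all centers in $L$; $C_{fcc}(n):=C_{\Lambda_{fcc}}(n)$. *)

theory Defs
  imports "HOL-Analysis.Analysis"
begin

definition lin_indep3 :: "real^3 \<Rightarrow> real^3 \<Rightarrow> real^3 \<Rightarrow> bool" where
  "lin_indep3 v1 v2 v3 \<longleftrightarrow>
     (\<forall>a b c :: real. a *\<^sub>R v1 + b *\<^sub>R v2 + c *\<^sub>R v3 = 0 \<longrightarrow> a = 0 \<and> b = 0 \<and> c = 0)"

definition int_span3 :: "real^3 \<Rightarrow> real^3 \<Rightarrow> real^3 \<Rightarrow> (real^3) set" where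
  "int_span3 v1 v2 v3 =
     {of_int a *\<^sub>R v1 + of_int b *\<^sub>R v2 + of_int c *\<^sub>R v3 | a b c :: int. True}"

definition is_basis3 :: "(real^3) set \<Rightarrow> real^3 \<Rightarrow> real^3 \<Rightarrow> real^3 \<Rightarrow> bool" where
  "is_basis3 L v1 v2 v3 \<longleftrightarrow> lin_indep3 v1 v2 v3 \<and> L = int_span3 v1 v2 v3"

definition is_lattice3 :: "(real^3) set \<Rightarrow> bool" where
  "is_lattice3 L \<longleftrightarrow> (\<exists>v1 v2 v3. is_basis3 L v1 v2 v3)"

definition min_norm :: "(real^3) set \<Rightarrow> real \<Rightarrow> bool" where
  "min_norm L d \<longleftrightarrow> (\<forall>x\<in>L. x \<noteq> 0 \<longrightarrow> norm x \<ge> d) \<and> (\<exists>x\<in>L. x \<noteq> 0 \<and> norm x = d)"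

text \<open>Face-centred cubic lattice with minimal distance 2:
  sqrt 2 times the integer points with even coordinate sum.\<close>
definition fcc :: "(real^3) set" where
  "fcc = {vector [sqrt 2 * of_int a, sqrt 2 * of_int b, sqrt 2 * of_int c] | a b c :: int.
            even (a + b + c)}"

definition unit_packing :: "(real^3) set \<Rightarrow> bool" where
  "unit_packing P \<longleftrightarrow> (\<forall>x\<in>P. \<forall>y\<in>P. x \<noteq> y \<longrightarrow> interior (cball x 1) \<inter> interior (cball y 1) = {})"

definition touching :: "(real^3) set \<Rightarrow> nat" where
  "touching P = card {{x, y} | x y. x \<in> P \<and> y \<in> P \<and> dist x y = 2}"

definition C_lat :: "(real^3) set \<Rightarrow> nat \<Rightarrow> nat" where
  "C_lat L n = Max {touching P | P. P \<subseteq> L \<and> finite P \<and> card P = n \<and> unit_packing P}"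

definition C_fcc :: "nat \<Rightarrow> nat" where
  "C_fcc n = C_lat fcc n"

end

theory Submission imports Defs begin

lemma span_mem: "of_int a *\<^sub>R v1 + of_int b *\<^sub>R v2 + of_int c *\<^sub>R v3 \<in> int_span3 v1 v2 v3"
  unfolding int_span3_def by blast

lemma span_E: assumes "x \<in> int_span3 v1 v2 v3"
  obtains a b c :: int where "x = of_int a *\<^sub>R v1 + of_int b *\<^sub>R v2 + of_int c *\<^sub>R v3"
  using assms unfolding int_span3_def by blast

lemma span_diff: assumes "x \<in> int_span3 v1 v2 v3" "y \<in> int_span3 v1 v2 v3"
  shows "x - y \<in> int_span3 v1 v2 v3"
proof -
  obtain a b c where x: "x = of_int a *\<^sub>R v1 + of_int b *\<^sub>R v2 + of_int c *\<^sub>R v3" using assms(1) span_E by blast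
  obtain a' b' c' where y: "y = of_int a' *\<^sub>R v1 + of_int b' *\<^sub>R v2 + of_int c' *\<^sub>R v3" using assms(2) span_E by blast
  have "x - y = of_int (a-a') *\<^sub>R v1 + of_int (b-b') *\<^sub>R v2 + of_int (c-c') *\<^sub>R v3"
    unfolding x y by (simp add: algebra_simps)
  then show ?thesis using span_mem by metis
qed

lemma span_nat_mult: assumes "x \<in> int_span3 v1 v2 v3"
  shows "of_nat k *\<^sub>R x \<in> int_span3 v1 v2 v3"
proof -
  obtain a b c where x: "x = of_int a *\<^sub>R v1 + of_int b *\<^sub>R v2 + of_int c *\<^sub>R v3" using assms(1) span_E by blast
  have "of_nat k *\<^sub>R x = of_int (int k*a) *\<^sub>R v1 + of_int (int k*b) *\<^sub>R v2 + of_int (int k*c) *\<^sub>R v3"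
    unfolding x by (simp add: algebra_simps)
  then show ?thesis using span_mem by metis
qed

lemma indepD: assumes "lin_indep3 v1 v2 v3" "a *\<^sub>R v1 + b *\<^sub>R v2 + c *\<^sub>R v3 = 0"
  shows "a = 0" "b = 0" "c = 0"
  using assms unfolding lin_indep3_def by blast+

lemma basis_swap12: assumes "is_basis3 L v1 v2 v3" shows "is_basis3 L v2 v1 v3"
proof -
  have li: "lin_indep3 v1 v2 v3" using assms unfolding is_basis3_def by simp
  have "lin_indep3 v2 v1 v3"
    unfolding lin_indep3_def
  proof (intro allI impI)
    fix a b c :: real assume h: "a *\<^sub>R v2 + b *\<^sub>R v1 + c *\<^sub>R v3 = 0"
    have "b *\<^sub>R v1 + a *\<^sub>R v2 + c *\<^sub>R v3 = 0" using h by (simp add: algebra_simps)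
    from indepD[OF li this] show "a = 0 \<and> b = 0 \<and> c = 0" by simp
  qed
  moreover have "int_span3 v1 v2 v3 = int_span3 v2 v1 v3"
  proof
    show "int_span3 v1 v2 v3 \<subseteq> int_span3 v2 v1 v3"
    proof
      fix x assume "x \<in> int_span3 v1 v2 v3"
      then obtain a b c where x: "x = of_int a *\<^sub>R v1 + of_int b *\<^sub>R v2 + of_int c *\<^sub>R v3" by (rule span_E)
      have "x = of_int b *\<^sub>R v2 + of_int a *\<^sub>R v1 + of_int c *\<^sub>R v3"
        unfolding x by (simp add: algebra_simps)
      then show "x \<in> int_span3 v2 v1 v3" using span_mem by metis
    qed
    show "int_span3 v2 v1 v3 \<subseteq> int_span3 v1 v2 v3"
    proof
      fix x assume "x \<in> int_span3 v2 v1 v3"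
      then obtain a b c where x: "x = of_int a *\<^sub>R v2 + of_int b *\<^sub>R v1 + of_int c *\<^sub>R v3" by (rule span_E)
      have "x = of_int b *\<^sub>R v1 + of_int a *\<^sub>R v2 + of_int c *\<^sub>R v3"
        unfolding x by (simp add: algebra_simps)
      then show "x \<in> int_span3 v1 v2 v3" using span_mem by metis
    qed
  qed
  ultimately show ?thesis using assms unfolding is_basis3_def by simp
qed

lemma basis_swap23: assumes "is_basis3 L v1 v2 v3" shows "is_basis3 L v1 v3 v2"
proof -
  have li: "lin_indep3 v1 v2 v3" using assms unfolding is_basis3_def by simp
  have "lin_indep3 v1 v3 v2"
    unfolding lin_indep3_def
  proof (intro allI impI)
    fix a b c :: real assume h: "a *\<^sub>R v1 + b *\<^sub>R v3 + c *\<^sub>R v2 = 0"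
    have "a *\<^sub>R v1 + c *\<^sub>R v2 + b *\<^sub>R v3 = 0" using h by (simp add: algebra_simps)
    from indepD[OF li this] show "a = 0 \<and> b = 0 \<and> c = 0" by simp
  qed
  moreover have "int_span3 v1 v2 v3 = int_span3 v1 v3 v2"
  proof
    show "int_span3 v1 v2 v3 \<subseteq> int_span3 v1 v3 v2"
    proof
      fix x assume "x \<in> int_span3 v1 v2 v3"
      then obtain a b c where x: "x = of_int a *\<^sub>R v1 + of_int b *\<^sub>R v2 + of_int c *\<^sub>R v3" by (rule span_E)
      have "x = of_int a *\<^sub>R v1 + of_int c *\<^sub>R v3 + of_int b *\<^sub>R v2"
        unfolding x by (simp add: algebra_simps)
      then show "x \<in> int_span3 v1 v3 v2" using span_mem by metis
    qed
    show "int_span3 v1 v3 v2 \<subseteq> int_span3 v1 v2 v3"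
    proof
      fix x assume "x \<in> int_span3 v1 v3 v2"
      then obtain a b c where x: "x = of_int a *\<^sub>R v1 + of_int b *\<^sub>R v3 + of_int c *\<^sub>R v2" by (rule span_E)
      have "x = of_int a *\<^sub>R v1 + of_int c *\<^sub>R v2 + of_int b *\<^sub>R v3"
        unfolding x by (simp add: algebra_simps)
      then show "x \<in> int_span3 v1 v2 v3" using span_mem by metis
    qed
  qed
  ultimately show ?thesis using assms unfolding is_basis3_def by simp
qed

lemma basis_rep1: assumes "is_basis3 L v1 v2 v3" shows "is_basis3 L (-(v1+v2+v3)) v2 v3"
proof -
  have li: "lin_indep3 v1 v2 v3" using assms unfolding is_basis3_def by simp
  have "lin_indep3 (-(v1+v2+v3)) v2 v3"
    unfolding lin_indep3_def
  proof (intro allI impI)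
    fix a b c :: real assume h: "a *\<^sub>R - (v1 + v2 + v3) + b *\<^sub>R v2 + c *\<^sub>R v3 = 0"
    have "(-a) *\<^sub>R v1 + (b-a) *\<^sub>R v2 + (c-a) *\<^sub>R v3 = 0" using h by (simp add: algebra_simps)
    from indepD[OF li this] show "a = 0 \<and> b = 0 \<and> c = 0" by simp
  qed
  moreover have "int_span3 v1 v2 v3 = int_span3 (-(v1+v2+v3)) v2 v3"
  proof
    show "int_span3 v1 v2 v3 \<subseteq> int_span3 (-(v1+v2+v3)) v2 v3"
    proof
      fix x assume "x \<in> int_span3 v1 v2 v3"
      then obtain a b c where x: "x = of_int a *\<^sub>R v1 + of_int b *\<^sub>R v2 + of_int c *\<^sub>R v3" by (rule span_E)
      have "x = of_int (-a) *\<^sub>R (-(v1+v2+v3)) + of_int (b-a) *\<^sub>R v2 + of_int (c-a) *\<^sub>R v3"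
        unfolding x by (simp add: algebra_simps)
      then show "x \<in> int_span3 (-(v1+v2+v3)) v2 v3" using span_mem by metis
    qed
    show "int_span3 (-(v1+v2+v3)) v2 v3 \<subseteq> int_span3 v1 v2 v3"
    proof
      fix x assume "x \<in> int_span3 (-(v1+v2+v3)) v2 v3"
      then obtain a b c where x: "x = of_int a *\<^sub>R (-(v1+v2+v3)) + of_int b *\<^sub>R v2 + of_int c *\<^sub>R v3" by (rule span_E)
      have "x = of_int (-a) *\<^sub>R v1 + of_int (b-a) *\<^sub>R v2 + of_int (c-a) *\<^sub>R v3"
        unfolding x by (simp add: algebra_simps)
      then show "x \<in> int_span3 v1 v2 v3" using span_mem by metis
    qed
  qed
  ultimately show ?thesis using assms unfolding is_basis3_def by simp
qed

lemma basis_sell: assumes "is_basis3 L v1 v2 v3" shows "is_basis3 L (-v1) v2 (v3+v1)"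
proof -
  have li: "lin_indep3 v1 v2 v3" using assms unfolding is_basis3_def by simp
  have "lin_indep3 (-v1) v2 (v3+v1)"
    unfolding lin_indep3_def
  proof (intro allI impI)
    fix a b c :: real assume h: "a *\<^sub>R - v1 + b *\<^sub>R v2 + c *\<^sub>R (v3+v1) = 0"
    have "(c-a) *\<^sub>R v1 + b *\<^sub>R v2 + c *\<^sub>R v3 = 0" using h by (simp add: algebra_simps)
    from indepD[OF li this] show "a = 0 \<and> b = 0 \<and> c = 0" by simp
  qed
  moreover have "int_span3 v1 v2 v3 = int_span3 (-v1) v2 (v3+v1)"
  proof
    show "int_span3 v1 v2 v3 \<subseteq> int_span3 (-v1) v2 (v3+v1)"
    proof
      fix x assume "x \<in> int_span3 v1 v2 v3"
      then obtain a b c where x: "x = of_int a *\<^sub>R v1 + of_int b *\<^sub>R v2 + of_int c *\<^sub>R v3" by (rule span_E)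
      have "x = of_int (c-a) *\<^sub>R (-v1) + of_int b *\<^sub>R v2 + of_int c *\<^sub>R (v3+v1)"
        unfolding x by (simp add: algebra_simps)
      then show "x \<in> int_span3 (-v1) v2 (v3+v1)" using span_mem by metis
    qed
    show "int_span3 (-v1) v2 (v3+v1) \<subseteq> int_span3 v1 v2 v3"
    proof
      fix x assume "x \<in> int_span3 (-v1) v2 (v3+v1)"
      then obtain a b c where x: "x = of_int a *\<^sub>R (-v1) + of_int b *\<^sub>R v2 + of_int c *\<^sub>R (v3+v1)" by (rule span_E)
      have "x = of_int (c-a) *\<^sub>R v1 + of_int b *\<^sub>R v2 + of_int c *\<^sub>R v3"
        unfolding x by (simp add: algebra_simps)
      then show "x \<in> int_span3 v1 v2 v3" using span_mem by metis
    qed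
  qed
  ultimately show ?thesis using assms unfolding is_basis3_def by simp
qed

definition cmap :: "real^3 \<Rightarrow> real^3 \<Rightarrow> real^3 \<Rightarrow> real^3 \<Rightarrow> real^3" where
  "cmap v1 v2 v3 y = y$1 *\<^sub>R v1 + y$2 *\<^sub>R v2 + y$3 *\<^sub>R v3"

lemma cmap_linear: "linear (cmap v1 v2 v3)"
  by (rule linearI) (simp_all add: cmap_def algebra_simps)

lemma cmap_inj: assumes "lin_indep3 v1 v2 v3" shows "inj (cmap v1 v2 v3)"
proof (rule linear_inj_on_iff_eq_0[THEN iffD2])
  show "linear (cmap v1 v2 v3)" by (rule cmap_linear)
  show "\<forall>x\<in>UNIV. cmap v1 v2 v3 x = 0 \<longrightarrow> x = 0"
  proof (intro ballI impI)
    fix x assume "cmap v1 v2 v3 x = 0"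
    then have e: "x$1 *\<^sub>R v1 + x$2 *\<^sub>R v2 + x$3 *\<^sub>R v3 = 0" unfolding cmap_def .
    have "x$1 = 0" "x$2 = 0" "x$3 = 0" using indepD[OF assms e] by auto
    then show "x = 0" by (simp add: vec_eq_iff forall_3)
  qed
  show "subspace (UNIV :: (real^3) set)" by simp
qed

lemma cmap_vec: "cmap v1 v2 v3 (vector [a,b,c]) = a *\<^sub>R v1 + b *\<^sub>R v2 + c *\<^sub>R v3"
  by (simp add: cmap_def)

lemma coord_bound: assumes "lin_indep3 v1 v2 v3"
  obtains B where "B > 0" "\<And>a b c. \<bar>a\<bar> \<le> B * norm (a *\<^sub>R v1 + b *\<^sub>R v2 + c *\<^sub>R v3) \<and>
      \<bar>b\<bar> \<le> B * norm (a *\<^sub>R v1 + b *\<^sub>R v2 + c *\<^sub>R v3) \<and> \<bar>c\<bar> \<le> B * norm (a *\<^sub>R v1 + b *\<^sub>R v2 + c *\<^sub>R v3)"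
proof -
  obtain g where g: "linear g" "g \<circ> cmap v1 v2 v3 = id"
    using linear_injective_left_inverse[OF cmap_linear cmap_inj[OF assms]] by blast
  obtain B where B: "B > 0" "\<And>x. norm (g x) \<le> B * norm x" using linear_bounded_pos[OF g(1)] by blast
  have "\<bar>a\<bar> \<le> B * norm (a *\<^sub>R v1 + b *\<^sub>R v2 + c *\<^sub>R v3) \<and>
      \<bar>b\<bar> \<le> B * norm (a *\<^sub>R v1 + b *\<^sub>R v2 + c *\<^sub>R v3) \<and> \<bar>c\<bar> \<le> B * norm (a *\<^sub>R v1 + b *\<^sub>R v2 + c *\<^sub>R v3)" for a b c
  proof -
    have e: "g (a *\<^sub>R v1 + b *\<^sub>R v2 + c *\<^sub>R v3) = vector [a,b,c]"
      using g(2) cmap_vec[of v1 v2 v3 a b c] by (metis comp_apply id_apply)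
    have n: "norm (vector [a,b,c] :: real^3) \<le> B * norm (a *\<^sub>R v1 + b *\<^sub>R v2 + c *\<^sub>R v3)"
      using B(2) e by metis
    show ?thesis using component_le_norm_cart[of "vector [a,b,c] :: real^3" 1]
       component_le_norm_cart[of "vector [a,b,c] :: real^3" 2]
       component_le_norm_cart[of "vector [a,b,c] :: real^3" 3] n by simp
  qed
  then show ?thesis using B(1) that by blast
qed

lemma finite_ball_lat: assumes "is_basis3 L v1 v2 v3"
  shows "finite {x\<in>L. norm x \<le> R}"
proof -
  have li: "lin_indep3 v1 v2 v3" and L: "L = int_span3 v1 v2 v3" using assms unfolding is_basis3_def by auto
  obtain B where B: "B > 0" "\<And>a b c. \<bar>a\<bar> \<le> B * norm (a *\<^sub>R v1 + b *\<^sub>R v2 + c *\<^sub>R v3) \<and>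
      \<bar>b\<bar> \<le> B * norm (a *\<^sub>R v1 + b *\<^sub>R v2 + c *\<^sub>R v3) \<and> \<bar>c\<bar> \<le> B * norm (a *\<^sub>R v1 + b *\<^sub>R v2 + c *\<^sub>R v3)"
    using coord_bound[OF li] by blast
  define N where "N = \<lceil>B * R\<rceil>"
  define F where "F = (\<lambda>(a,b,c). of_int a *\<^sub>R v1 + of_int b *\<^sub>R v2 + of_int c *\<^sub>R v3) ` ({-N..N} \<times> {-N..N} \<times> {-N..N})"
  have "finite F" unfolding F_def by simp
  moreover have "{x\<in>L. norm x \<le> R} \<subseteq> F"
  proof
    fix x assume "x \<in> {x\<in>L. norm x \<le> R}"
    then have xL: "x \<in> int_span3 v1 v2 v3" and nx: "norm x \<le> R" using L by auto
    obtain a b c where x: "x = of_int a *\<^sub>R v1 + of_int b *\<^sub>R v2 + of_int c *\<^sub>R v3" using xL by (rule span_E)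
    have bb: "B * norm x \<le> B * R" using nx B(1) by simp
    have h0: "\<bar>real_of_int a\<bar> \<le> B * norm x \<and> \<bar>real_of_int b\<bar> \<le> B * norm x \<and> \<bar>real_of_int c\<bar> \<le> B * norm x"
      unfolding x by (rule B(2))
    have h: "\<bar>real_of_int a\<bar> \<le> B * R" "\<bar>real_of_int b\<bar> \<le> B * R" "\<bar>real_of_int c\<bar> \<le> B * R"
      using h0 bb by linarith+
    have ceil: "\<bar>z\<bar> \<le> N" if "\<bar>real_of_int z\<bar> \<le> B * R" for z :: int
    proof -
      have "real_of_int \<bar>z\<bar> \<le> B * R" using that by simp
      also have "B * R \<le> real_of_int N" unfolding N_def by (rule le_of_int_ceiling)
      finally show ?thesis by linarith
    qed
    have "a \<in> {-N..N}" "b \<in> {-N..N}" "c \<in> {-N..N}" using ceil[OF h(1)] ceil[OF h(2)] ceil[OF h(3)] by auto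
    then have "(a,b,c) \<in> {-N..N} \<times> {-N..N} \<times> {-N..N}" by simp
    then show "x \<in> F" unfolding F_def x by (rule rev_image_eqI) simp
  qed
  ultimately show ?thesis by (rule finite_subset[rotated])
qed

definition Phi :: "real^3 \<Rightarrow> real^3 \<Rightarrow> real^3 \<Rightarrow> real" where
  "Phi v1 v2 v3 = (norm v1)^2 + (norm v2)^2 + (norm v3)^2 + (norm (v1+v2+v3))^2"

lemma min_basis_exists: assumes "is_lattice3 L"
  obtains v1 v2 v3 where "is_basis3 L v1 v2 v3" "\<And>u1 u2 u3. is_basis3 L u1 u2 u3 \<Longrightarrow> Phi v1 v2 v3 \<le> Phi u1 u2 u3"
proof -
  obtain b1 b2 b3 where b: "is_basis3 L b1 b2 b3" using assms unfolding is_lattice3_def by blast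
  define R where "R = Phi b1 b2 b3"
  define T where "T = {x\<in>L. norm x \<le> sqrt R}"
  define Bs where "Bs = {(u1,u2,u3). is_basis3 L u1 u2 u3 \<and> Phi u1 u2 u3 \<le> R}"
  have fT: "finite T" unfolding T_def by (rule finite_ball_lat[OF b])
  have sub: "Bs \<subseteq> T \<times> T \<times> T"
  proof
    fix u assume "u \<in> Bs"
    then obtain u1 u2 u3 where u: "u = (u1,u2,u3)" "is_basis3 L u1 u2 u3" "Phi u1 u2 u3 \<le> R"
      unfolding Bs_def by auto
    have inL: "u1 \<in> L" "u2 \<in> L" "u3 \<in> L" using u(2) unfolding is_basis3_def
      using span_mem[of 1 u1 0 u2 0 u3] span_mem[of 0 u1 1 u2 0 u3] span_mem[of 0 u1 0 u2 1 u3] by auto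
    have "(norm u1)^2 \<le> R" "(norm u2)^2 \<le> R" "(norm u3)^2 \<le> R"
      using u(3) zero_le_power2[of "norm u1"] zero_le_power2[of "norm u2"] zero_le_power2[of "norm u3"]
        zero_le_power2[of "norm (u1+u2+u3)"] unfolding Phi_def by linarith+
    then have "norm u1 \<le> sqrt R" "norm u2 \<le> sqrt R" "norm u3 \<le> sqrt R"
      by (simp_all add: real_le_rsqrt)
    then show "u \<in> T \<times> T \<times> T" using inL u(1) unfolding T_def by auto
  qed
  have fB: "finite Bs" using finite_subset[OF sub] fT by blast
  have neB: "(b1,b2,b3) \<in> Bs" unfolding Bs_def R_def using b by simp
  define m where "m = Min ((\<lambda>(u1,u2,u3). Phi u1 u2 u3) ` Bs)"
  have "m \<in> (\<lambda>(u1,u2,u3). Phi u1 u2 u3) ` Bs" unfolding m_def using fB neB by (intro Min_in) auto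
  then obtain v1 v2 v3 where v: "(v1,v2,v3) \<in> Bs" "m = Phi v1 v2 v3" by auto
  have "Phi v1 v2 v3 \<le> Phi u1 u2 u3" if "is_basis3 L u1 u2 u3" for u1 u2 u3
  proof (cases "Phi u1 u2 u3 \<le> R")
    case True
    then have "(u1,u2,u3) \<in> Bs" unfolding Bs_def using that by simp
    then have "Phi u1 u2 u3 \<in> (\<lambda>(u1,u2,u3). Phi u1 u2 u3) ` Bs" by force
    then have "m \<le> Phi u1 u2 u3" unfolding m_def using fB by (intro Min_le) auto
    then show ?thesis using v by simp
  next
    case False
    then show ?thesis using v(1) unfolding Bs_def by auto
  qed
  then show ?thesis using v(1) that unfolding Bs_def by auto
qed

lemma Phi_sell: "Phi (-a) b (c+a) = Phi a b c - 2 * (a \<bullet> b)"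
proof -
  have e: "-a + b + (c+a) = b + c" by (simp add: algebra_simps)
  show ?thesis unfolding Phi_def e power2_norm_eq_inner
    by (simp add: inner_add_left inner_add_right inner_commute algebra_simps)
qed

lemma Phi_swap12: "Phi v2 v1 v3 = Phi v1 v2 v3"
  unfolding Phi_def by (simp add: algebra_simps)
lemma Phi_swap23: "Phi v1 v3 v2 = Phi v1 v2 v3"
  unfolding Phi_def by (simp add: algebra_simps)
lemma Phi_rep1: "Phi (-(v1+v2+v3)) v2 v3 = Phi v1 v2 v3"
proof -
  have e: "-(v1+v2+v3) + v2 + v3 = - v1" by (simp add: algebra_simps)
  show ?thesis unfolding Phi_def e norm_minus_cancel by simp
qed

lemma min_pair:
  assumes min: "\<And>u1 u2 u3. is_basis3 L u1 u2 u3 \<Longrightarrow> Phi v1 v2 v3 \<le> Phi u1 u2 u3"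
    and b: "is_basis3 L a b c" and e: "Phi a b c = Phi v1 v2 v3"
  shows "a \<bullet> b \<le> 0"
proof -
  have "Phi v1 v2 v3 \<le> Phi (-a) b (c+a)" using min[OF basis_sell[OF b]] .
  then show ?thesis using e Phi_sell[of a b c] by linarith
qed

lemma min_obtuse:
  assumes b: "is_basis3 L v1 v2 v3"
    and min: "\<And>u1 u2 u3. is_basis3 L u1 u2 u3 \<Longrightarrow> Phi v1 v2 v3 \<le> Phi u1 u2 u3"
  shows "v1 \<bullet> v2 \<le> 0" "v1 \<bullet> v3 \<le> 0" "v2 \<bullet> v3 \<le> 0"
    "(v1+v2+v3) \<bullet> v1 \<ge> 0" "(v1+v2+v3) \<bullet> v2 \<ge> 0" "(v1+v2+v3) \<bullet> v3 \<ge> 0"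
proof -
  show "v1 \<bullet> v2 \<le> 0" using min_pair[OF min b] by simp
  show "v1 \<bullet> v3 \<le> 0" using min_pair[OF min basis_swap23[OF b]] Phi_swap23 by simp
  have b231: "is_basis3 L v2 v3 v1" using basis_swap23[OF basis_swap12[OF b]] .
  show "v2 \<bullet> v3 \<le> 0" using min_pair[OF min b231] Phi_swap23 Phi_swap12 by metis
  have b023: "is_basis3 L (-(v1+v2+v3)) v2 v3" using basis_rep1[OF b] .
  have "(-(v1+v2+v3)) \<bullet> v2 \<le> 0" using min_pair[OF min b023] Phi_rep1 by metis
  then show "(v1+v2+v3) \<bullet> v2 \<ge> 0" by (simp add: inner_diff_left inner_add_left)
  have "(-(v1+v2+v3)) \<bullet> v3 \<le> 0" using min_pair[OF min basis_swap23[OF b023]] Phi_rep1 Phi_swap23 by metis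
  then show "(v1+v2+v3) \<bullet> v3 \<ge> 0" by (simp add: inner_diff_left inner_add_left)
  have b013: "is_basis3 L (-(v2+v1+v3)) v1 v3" using basis_rep1[OF basis_swap12[OF b]] .
  have "(-(v2+v1+v3)) \<bullet> v1 \<le> 0" using min_pair[OF min b013] Phi_rep1 Phi_swap12 by metis
  moreover have "v2+v1+v3 = v1+v2+v3" by (simp add: algebra_simps)
  ultimately show "(v1+v2+v3) \<bullet> v1 \<ge> 0" by (simp add: inner_diff_left inner_add_left)
qed

lemma inner_ident:
  fixes v1 v2 v3 :: "real^3"
  shows "((b1-b0) *\<^sub>R v1 + (b2-b0) *\<^sub>R v2 + (b3-b0) *\<^sub>R v3) \<bullet> ((c1-c0) *\<^sub>R v1 + (c2-c0) *\<^sub>R v2 + (c3-c0) *\<^sub>R v3)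
   = ((v1+v2+v3) \<bullet> v1) * ((b0-b1)*(c0-c1)) + ((v1+v2+v3) \<bullet> v2) * ((b0-b2)*(c0-c2))
   + ((v1+v2+v3) \<bullet> v3) * ((b0-b3)*(c0-c3))
   + (-(v1 \<bullet> v2)) * ((b1-b2)*(c1-c2)) + (-(v1 \<bullet> v3)) * ((b1-b3)*(c1-c3)) + (-(v2 \<bullet> v3)) * ((b2-b3)*(c2-c3))"
  by (simp add: inner_add_left inner_add_right inner_commute algebra_simps)

lemma term_nonneg:
  fixes x y M :: int
  assumes "x \<le> M" "y \<le> M"
  shows "((if x = M then 1 else 0) - (if y = M then 1 else 0)) *
         ((x - (if x = M then 1 else 0)) - (y - (if y = M then 1 else 0))) \<ge> (0::int)"
  using assms by auto

lemma int_facts: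
  fixes a b c :: int
  assumes M_def: "M = max 0 (max a (max b c))" and m_def: "m = min 0 (min a (min b c))"
    and b0_def: "b0 = (if 0 = M then 1 else 0::int)" and b1_def: "b1 = (if a = M then 1 else 0::int)"
    and b2_def: "b2 = (if b = M then 1 else 0::int)" and b3_def: "b3 = (if c = M then 1 else 0::int)"
  assumes "M - m \<ge> 2"
  shows "\<not> (b1 = b0 \<and> b2 = b0 \<and> b3 = b0)"
    "\<not> (a - b1 = 0 - b0 \<and> b - b2 = 0 - b0 \<and> c - b3 = 0 - b0)"
  using assms unfolding M_def m_def b0_def b1_def b2_def b3_def by (auto simp: max_def min_def split: if_splits)

lemma lat_norm_ge: assumes "min_norm L 2" "x \<in> L" "x \<noteq> 0" shows "norm x \<ge> 2"
  using assms unfolding min_norm_def by blast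

lemma nz_combo: assumes "lin_indep3 v1 v2 v3" "\<not> (p = 0 \<and> q = 0 \<and> r = (0::int))"
  shows "of_int p *\<^sub>R v1 + of_int q *\<^sub>R v2 + of_int r *\<^sub>R v3 \<noteq> 0"
  using indepD[OF assms(1), of "of_int p" "of_int q" "of_int r"] assms(2) by auto

lemma spread_le1:
  assumes bas: "is_basis3 L v1 v2 v3" and mn: "min_norm L 2"
    and o1: "v1 \<bullet> v2 \<le> 0" and o2: "v1 \<bullet> v3 \<le> 0" and o3: "v2 \<bullet> v3 \<le> 0"
    and o4: "(v1+v2+v3) \<bullet> v1 \<ge> 0" and o5: "(v1+v2+v3) \<bullet> v2 \<ge> 0" and o6: "(v1+v2+v3) \<bullet> v3 \<ge> 0"
    and nx: "norm (of_int a *\<^sub>R v1 + of_int b *\<^sub>R v2 + of_int c *\<^sub>R v3) = 2"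
  shows "max 0 (max a (max b c)) - min 0 (min a (min b c)) \<le> 1"
proof (rule ccontr)
  define M where "M = max 0 (max a (max b c))"
  define m where "m = min 0 (min a (min b c))"
  assume "\<not> ?thesis"
  then have sp: "M - m \<ge> 2" unfolding M_def m_def by simp
  have li: "lin_indep3 v1 v2 v3" and L: "L = int_span3 v1 v2 v3" using bas unfolding is_basis3_def by auto
  define b0 where "b0 = (if 0 = M then 1 else 0::int)"
  define b1 where "b1 = (if a = M then 1 else 0::int)"
  define b2 where "b2 = (if b = M then 1 else 0::int)"
  define b3 where "b3 = (if c = M then 1 else 0::int)"
  define c0 where "c0 = 0 - b0"
  define c1 where "c1 = a - b1"
  define c2 where "c2 = b - b2"
  define c3 where "c3 = c - b3"
  have nf: "\<not> (b1 = b0 \<and> b2 = b0 \<and> b3 = b0)" "\<not> (a - b1 = 0 - b0 \<and> b - b2 = 0 - b0 \<and> c - b3 = 0 - b0)"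
    using int_facts[OF M_def m_def b0_def b1_def b2_def b3_def sp] by auto
  define y where "y = of_int (b1-b0) *\<^sub>R v1 + of_int (b2-b0) *\<^sub>R v2 + of_int (b3-b0) *\<^sub>R v3"
  define z where "z = of_int (c1-c0) *\<^sub>R v1 + of_int (c2-c0) *\<^sub>R v2 + of_int (c3-c0) *\<^sub>R v3"
  have yL: "y \<in> L" "z \<in> L" unfolding y_def z_def L by (rule span_mem)+
  have y0: "y \<noteq> 0" unfolding y_def by (rule nz_combo[OF li]) (use nf(1) in auto)
  have z0: "z \<noteq> 0" unfolding z_def c0_def c1_def c2_def c3_def by (rule nz_combo[OF li]) (use nf(2) in auto)
  have ny: "norm y \<ge> 2" by (rule lat_norm_ge[OF mn yL(1) y0])
  have nz: "norm z \<ge> 2" by (rule lat_norm_ge[OF mn yL(2) z0])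
  have xyz: "of_int a *\<^sub>R v1 + of_int b *\<^sub>R v2 + of_int c *\<^sub>R v3 = y + z"
    unfolding y_def z_def c0_def c1_def c2_def c3_def by (simp add: algebra_simps)
  have le: "0 \<le> M" "a \<le> M" "b \<le> M" "c \<le> M" unfolding M_def by auto
  have t01: "(b0-b1)*(c0-c1) \<ge> 0" unfolding b0_def b1_def c0_def c1_def by (rule term_nonneg) (use le in auto)
  have t02: "(b0-b2)*(c0-c2) \<ge> 0" unfolding b0_def b2_def c0_def c2_def by (rule term_nonneg) (use le in auto)
  have t03: "(b0-b3)*(c0-c3) \<ge> 0" unfolding b0_def b3_def c0_def c3_def by (rule term_nonneg) (use le in auto)
  have t12: "(b1-b2)*(c1-c2) \<ge> 0" unfolding b1_def b2_def c1_def c2_def by (rule term_nonneg) (use le in auto)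
  have t13: "(b1-b3)*(c1-c3) \<ge> 0" unfolding b1_def b3_def c1_def c3_def by (rule term_nonneg) (use le in auto)
  have t23: "(b2-b3)*(c2-c3) \<ge> 0" unfolding b2_def b3_def c2_def c3_def by (rule term_nonneg) (use le in auto)
  have yz: "y \<bullet> z \<ge> 0"
  proof -
    have yy: "y = (of_int b1 - of_int b0) *\<^sub>R v1 + (of_int b2 - of_int b0) *\<^sub>R v2 + (of_int b3 - of_int b0) *\<^sub>R v3"
      unfolding y_def by simp
    have zz: "z = (of_int c1 - of_int c0) *\<^sub>R v1 + (of_int c2 - of_int c0) *\<^sub>R v2 + (of_int c3 - of_int c0) *\<^sub>R v3"
      unfolding z_def by simp
    have r': "(of_int b0 - of_int b1)*(of_int c0 - of_int c1) \<ge> (0::real)"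
      "(of_int b0 - of_int b2)*(of_int c0 - of_int c2) \<ge> (0::real)"
      "(of_int b0 - of_int b3)*(of_int c0 - of_int c3) \<ge> (0::real)"
      "(of_int b1 - of_int b2)*(of_int c1 - of_int c2) \<ge> (0::real)"
      "(of_int b1 - of_int b3)*(of_int c1 - of_int c3) \<ge> (0::real)"
      "(of_int b2 - of_int b3)*(of_int c2 - of_int c3) \<ge> (0::real)"
      unfolding of_int_diff[symmetric] of_int_mult[symmetric] of_int_0_le_iff
      using t01 t02 t03 t12 t13 t23 by simp_all
    have p: "-(v1 \<bullet> v2) \<ge> 0" "-(v1 \<bullet> v3) \<ge> 0" "-(v2 \<bullet> v3) \<ge> 0" using o1 o2 o3 by simp_all
    show ?thesis unfolding yy zz inner_ident
      using mult_nonneg_nonneg[OF o4 r'(1)] mult_nonneg_nonneg[OF o5 r'(2)] mult_nonneg_nonneg[OF o6 r'(3)]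
        mult_nonneg_nonneg[OF p(1) r'(4)] mult_nonneg_nonneg[OF p(2) r'(5)] mult_nonneg_nonneg[OF p(3) r'(6)]
      by linarith
  qed
  have "(norm (y+z))^2 = (norm y)^2 + 2 * (y \<bullet> z) + (norm z)^2"
    by (simp add: power2_norm_eq_inner inner_add_left inner_add_right inner_commute)
  moreover have "(norm y)^2 \<ge> 4" "(norm z)^2 \<ge> 4"
    using power_mono[OF ny, of 2] power_mono[OF nz, of 2] by simp_all
  moreover have "(norm (y+z))^2 = 4" using nx xyz by simp
  ultimately show False using yz by linarith
qed

definition "w1 = (vector [-sqrt 2, 0, sqrt 2] :: real^3)"
definition "w2 = (vector [sqrt 2, sqrt 2, 0] :: real^3)"
definition "w3 = (vector [sqrt 2, -sqrt 2, 0] :: real^3)"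

lemma wcombo: "a *\<^sub>R w1 + b *\<^sub>R w2 + c *\<^sub>R w3 = (vector [sqrt 2 * (b+c-a), sqrt 2 * (b-c), sqrt 2 * a] :: real^3)"
  by (simp add: vec_eq_iff forall_3 w1_def w2_def w3_def algebra_simps)

lemma norm_vec3: "(norm (vector [x, y, z] :: real^3))^2 = x^2 + y^2 + z^2"
  by (simp add: norm_vec_def L2_set_def sum_3)

lemma wnorm: "(norm (of_int a *\<^sub>R w1 + of_int b *\<^sub>R w2 + of_int c *\<^sub>R w3))^2
   = 2 * of_int ((b+c-a)^2 + (b-c)^2 + a^2)"
  unfolding wcombo norm_vec3 power_mult_distrib by simp

lemma fcc_basis: "is_basis3 fcc w1 w2 w3"
proof -
  have "lin_indep3 w1 w2 w3" unfolding lin_indep3_def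
  proof (intro allI impI)
    fix a b c :: real assume "a *\<^sub>R w1 + b *\<^sub>R w2 + c *\<^sub>R w3 = 0"
    then have "sqrt 2 * (b+c-a) = 0" "sqrt 2 * (b-c) = 0" "sqrt 2 * a = 0"
      unfolding wcombo by (simp_all add: vec_eq_iff forall_3)
    then show "a = 0 \<and> b = 0 \<and> c = 0" by simp
  qed
  moreover have "fcc = int_span3 w1 w2 w3"
  proof
    show "fcc \<subseteq> int_span3 w1 w2 w3"
    proof
      fix x assume "x \<in> fcc"
      then obtain a b c :: int where x: "x = vector [sqrt 2 * of_int a, sqrt 2 * of_int b, sqrt 2 * of_int c]"
        and ev: "even (a+b+c)" unfolding fcc_def by blast
      obtain k where k: "a+b+c = 2*k" using ev by blast
      have i1: "k + (k-b) - c = a" using k by simp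
      have r1: "real_of_int k + real_of_int (k-b) - real_of_int c = real_of_int a"
        using arg_cong[OF i1, of real_of_int] by simp
      have r2: "real_of_int k - real_of_int (k-b) = real_of_int b" by simp
      have "x = of_int c *\<^sub>R w1 + of_int k *\<^sub>R w2 + of_int (k-b) *\<^sub>R w3"
        unfolding wcombo x r1 r2 by simp
      then show "x \<in> int_span3 w1 w2 w3" using span_mem by metis
    qed
    show "int_span3 w1 w2 w3 \<subseteq> fcc"
    proof
      fix x assume "x \<in> int_span3 w1 w2 w3"
      then obtain a b c where x: "x = of_int a *\<^sub>R w1 + of_int b *\<^sub>R w2 + of_int c *\<^sub>R w3" by (rule span_E)
      have "x = vector [sqrt 2 * of_int (b+c-a), sqrt 2 * of_int (b-c), sqrt 2 * of_int a]"
        unfolding x wcombo by simp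
      moreover have "even ((b+c-a) + (b-c) + a)" by simp
      ultimately show "x \<in> fcc" unfolding fcc_def by blast
    qed
  qed
  ultimately show ?thesis unfolding is_basis3_def by simp
qed

lemma int_sq3: fixes p q r :: int assumes "p + q + r = 2*t" "\<not>(p = 0 \<and> q = 0 \<and> r = 0)"
  shows "p^2 + q^2 + r^2 \<ge> 2"
proof (rule ccontr)
  assume "\<not> ?thesis"
  then have h: "p^2 + q^2 + r^2 \<le> 1" by simp
  have "p^2 \<le> 1" "q^2 \<le> 1" "r^2 \<le> 1" using h zero_le_power2[of p] zero_le_power2[of q] zero_le_power2[of r] by linarith+
  then have "\<bar>p\<bar> \<le> 1" "\<bar>q\<bar> \<le> 1" "\<bar>r\<bar> \<le> 1" by (simp_all add: abs_square_le_1)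
  then have "p \<in> {-1,0,1}" "q \<in> {-1,0,1}" "r \<in> {-1,0,1}" by auto
  then show False using assms h by (auto; presburger)
qed

lemma fcc_dist: assumes "x \<in> fcc" "y \<in> fcc" "x \<noteq> y" shows "dist x y \<ge> 2"
proof -
  have "x - y \<in> int_span3 w1 w2 w3" using span_diff assms fcc_basis unfolding is_basis3_def by metis
  then obtain a b c where e: "x - y = of_int a *\<^sub>R w1 + of_int b *\<^sub>R w2 + of_int c *\<^sub>R w3" by (rule span_E)
  have li: "lin_indep3 w1 w2 w3" using fcc_basis unfolding is_basis3_def by simp
  have "\<not> (a = 0 \<and> b = 0 \<and> c = 0)" using e assms(3) by auto
  then have "\<not> (b+c-a = 0 \<and> b-c = 0 \<and> a = 0)" by auto
  then have "(b+c-a)^2 + (b-c)^2 + a^2 \<ge> 2" by (intro int_sq3[of _ _ _ b]) auto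
  then have h2: "real_of_int ((b+c-a)^2 + (b-c)^2 + a^2) \<ge> 2" by (metis of_int_le_iff of_int_numeral)
  have dbl: "\<And>t::real. 2 \<le> t \<Longrightarrow> 4 \<le> 2 * t" by simp
  have h3: "4 \<le> 2 * real_of_int ((b+c-a)^2 + (b-c)^2 + a^2)" by (rule dbl[OF h2])
  have "(norm (x-y))^2 \<ge> 4" unfolding e wnorm by (rule h3)
  then have "norm (x-y) \<ge> 2"
    using power2_le_imp_le[of 2 "norm (x-y)"] by simp
  then show ?thesis by (simp add: dist_norm)
qed

lemma touching_le: assumes "finite P" shows "touching P \<le> 2 ^ card P"
proof -
  have "{{x, y} | x y. x \<in> P \<and> y \<in> P \<and> dist x y = 2} \<subseteq> Pow P" by auto
  then have "touching P \<le> card (Pow P)" unfolding touching_def using assms by (intro card_mono) auto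
  then show ?thesis using card_Pow[OF assms] by simp
qed

lemma finite_touch_set: "finite {touching P | P. P \<subseteq> X \<and> finite P \<and> card P = n \<and> unit_packing P}"
proof -
  have "{touching P | P. P \<subseteq> X \<and> finite P \<and> card P = n \<and> unit_packing P} \<subseteq> {..2^n}"
    using touching_le by fastforce
  then show ?thesis using finite_subset by blast
qed

lemma packing_of_dist: assumes "\<And>x y. x \<in> P \<Longrightarrow> y \<in> P \<Longrightarrow> x \<noteq> y \<Longrightarrow> dist x y \<ge> 2"
  shows "unit_packing P"
  unfolding unit_packing_def
proof (intro ballI impI)
  fix x y assume h: "x \<in> P" "y \<in> P" "x \<noteq> y"
  show "interior (cball x 1) \<inter> interior (cball y 1) = {}"
  proof (rule ccontr)
    assume "\<not> ?thesis"
    then obtain z where "z \<in> ball x 1" "z \<in> ball y 1" by auto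
    then have "dist x z < 1" "dist y z < 1" by auto
    then have "dist x y < 2" using dist_triangle[of x y z] by (simp add: dist_commute)
    then show False using assms[OF h] by simp
  qed
qed

lemma touching_mono:
  assumes fin: "finite P" and inj: "inj_on f P"
    and d: "\<And>x y. x \<in> P \<Longrightarrow> y \<in> P \<Longrightarrow> dist x y = 2 \<Longrightarrow> dist (f x) (f y) = 2"
  shows "touching P \<le> touching (f ` P)"
proof -
  define A where "A = {{x, y} | x y. x \<in> P \<and> y \<in> P \<and> dist x y = 2}"
  define B where "B = {{x, y} | x y. x \<in> f ` P \<and> y \<in> f ` P \<and> dist x y = 2}"
  have AP: "\<And>s. s \<in> A \<Longrightarrow> s \<subseteq> P" unfolding A_def by auto
  have "inj_on (image f) A"
  proof (rule inj_onI)
    fix s t assume "s \<in> A" "t \<in> A" "f ` s = f ` t"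
    then show "s = t" using inj_on_image_eq_iff[OF inj AP AP] by blast
  qed
  moreover have "image f ` A \<subseteq> B"
  proof
    fix u assume "u \<in> image f ` A"
    then obtain x y where "x \<in> P" "y \<in> P" "dist x y = 2" "u = {f x, f y}" unfolding A_def by auto
    then show "u \<in> B" unfolding B_def using d by blast
  qed
  moreover have "finite B"
  proof -
    have "B \<subseteq> Pow (f ` P)" unfolding B_def by auto
    then show ?thesis using fin by (meson finite_Pow_iff finite_imageI finite_subset)
  qed
  ultimately have "card A \<le> card B" by (intro card_inj_on_le) auto
  then show ?thesis unfolding touching_def A_def B_def .
qed

lemma C_mono:
  assumes mn: "min_norm L 2" and Lsub: "\<And>x k. x \<in> L \<Longrightarrow> of_nat k *\<^sub>R x \<in> L"
    and inj: "inj_on f L" and img: "f ` L \<subseteq> fcc"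
    and d: "\<And>x y. x \<in> L \<Longrightarrow> y \<in> L \<Longrightarrow> dist x y = 2 \<Longrightarrow> dist (f x) (f y) = 2"
    and Ldiff: "\<And>x y. x \<in> L \<Longrightarrow> y \<in> L \<Longrightarrow> x - y \<in> L"
  shows "C_lat L n \<le> C_fcc n"
proof -
  define SL where "SL = {touching P | P. P \<subseteq> L \<and> finite P \<and> card P = n \<and> unit_packing P}"
  define SF where "SF = {touching P | P. P \<subseteq> fcc \<and> finite P \<and> card P = n \<and> unit_packing P}"
  have fL: "finite SL" unfolding SL_def by (rule finite_touch_set)
  have fF: "finite SF" unfolding SF_def by (rule finite_touch_set)
  have packL: "unit_packing P" if "P \<subseteq> L" for P
  proof (rule packing_of_dist)
    fix x y assume "x \<in> P" "y \<in> P" "x \<noteq> y"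
    then have "x - y \<in> L" "x - y \<noteq> 0" using that Ldiff by auto
    then show "dist x y \<ge> 2" using lat_norm_ge[OF mn] by (simp add: dist_norm)
  qed
  obtain v where v: "v \<in> L" "v \<noteq> 0" using mn unfolding min_norm_def by blast
  define P0 where "P0 = (\<lambda>k. of_nat k *\<^sub>R v) ` {..<n}"
  have "inj_on (\<lambda>k. of_nat k *\<^sub>R v) {..<n}" using v(2) by (intro inj_onI) simp
  then have cP0: "card P0 = n" unfolding P0_def by (simp add: card_image)
  have "P0 \<subseteq> L" unfolding P0_def using Lsub v(1) by auto
  then have "touching P0 \<in> SL" unfolding SL_def using cP0 packL by (auto simp: P0_def)
  then have neL: "SL \<noteq> {}" by auto
  have "Max SL \<in> SL" using fL neL by (rule Max_in)
  then obtain P where P: "P \<subseteq> L" "finite P" "card P = n" "Max SL = touching P" unfolding SL_def by auto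
  have injP: "inj_on f P" using inj P(1) inj_on_subset by blast
  have "touching P \<le> touching (f ` P)"
    using touching_mono[OF P(2) injP] d P(1) by blast
  moreover have "touching (f ` P) \<in> SF"
  proof -
    have "f ` P \<subseteq> fcc" using img P(1) by auto
    moreover have "card (f ` P) = n" using card_image[OF injP] P(3) by simp
    moreover have "unit_packing (f ` P)"
      by (rule packing_of_dist) (use fcc_dist \<open>f ` P \<subseteq> fcc\<close> in blast)
    ultimately show ?thesis unfolding SF_def using P(2) by blast
  qed
  then have "touching (f ` P) \<le> Max SF" using fF by (rule Max_ge[rotated])
  ultimately show ?thesis unfolding C_fcc_def C_lat_def SL_def[symmetric] SF_def[symmetric] using P(4) by simp
qed

lemma pat:
  fixes a b c :: int
  assumes "max 0 (max a (max b c)) - min 0 (min a (min b c)) \<le> 1" "\<not>(a=0 \<and> b=0 \<and> c=0)"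
    "\<not>(a=0 \<and> b=1 \<and> c=1)" "\<not>(a=0 \<and> b= -1 \<and> c= -1)"
  shows "(b+c-a)^2 + (b-c)^2 + a^2 = 2"
proof -
  have "a \<in> {-1,0,1}" "b \<in> {-1,0,1}" "c \<in> {-1,0,1}" using assms(1) by (auto simp: max_def min_def split: if_splits)
  then show ?thesis using assms by auto
qed

lemma norm_from_sq: assumes "(norm z)^2 = 4" shows "norm z = 2"
proof -
  have "norm z = sqrt ((norm z)^2)" by simp
  also have "\<dots> = 2" using assms by simp
  finally show ?thesis .
qed

lemma keyB:
  assumes bas: "is_basis3 L u1 u2 u3" and mn: "min_norm L 2"
    and o1: "u1 \<bullet> u2 \<le> 0" and o2: "u1 \<bullet> u3 \<le> 0" and o3: "u2 \<bullet> u3 \<le> 0"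
    and o4: "(u1+u2+u3) \<bullet> u1 \<ge> 0" and o5: "(u1+u2+u3) \<bullet> u2 \<ge> 0" and o6: "(u1+u2+u3) \<bullet> u3 \<ge> 0"
    and n23: "norm (u2+u3) \<noteq> 2"
    and nx: "norm (of_int a *\<^sub>R u1 + of_int b *\<^sub>R u2 + of_int c *\<^sub>R u3) = 2"
  shows "norm (of_int a *\<^sub>R w1 + of_int b *\<^sub>R w2 + of_int c *\<^sub>R w3) = 2"
proof -
  have sp: "max 0 (max a (max b c)) - min 0 (min a (min b c)) \<le> 1"
    by (rule spread_le1[OF bas mn o1 o2 o3 o4 o5 o6 nx])
  have z: "\<not>(a=0 \<and> b=0 \<and> c=0)" using nx by auto
  have p1: "\<not>(a=0 \<and> b=1 \<and> c=1)" using nx n23 by auto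
  have p2: "\<not>(a=0 \<and> b= -1 \<and> c= -1)"
  proof
    assume "a=0 \<and> b= -1 \<and> c= -1"
    then have "of_int a *\<^sub>R u1 + of_int b *\<^sub>R u2 + of_int c *\<^sub>R u3 = -(u2+u3)" by simp
    then show False using nx n23 by (metis norm_minus_cancel)
  qed
  have "(b+c-a)^2 + (b-c)^2 + a^2 = 2" by (rule pat[OF sp z p1 p2])
  then have "(norm (of_int a *\<^sub>R w1 + of_int b *\<^sub>R w2 + of_int c *\<^sub>R w3))^2 = 4"
    unfolding wnorm by simp
  then show ?thesis by (rule norm_from_sq)
qed

lemma f_exists:
  assumes li: "lin_indep3 u1 u2 u3"
  obtains f where "\<And>a b c::int. f (of_int a *\<^sub>R u1 + of_int b *\<^sub>R u2 + of_int c *\<^sub>R u3)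
                      = of_int a *\<^sub>R w1 + of_int b *\<^sub>R w2 + of_int c *\<^sub>R w3"
    "inj_on f (int_span3 u1 u2 u3)"
proof -
  obtain g where g: "linear g" "g \<circ> cmap u1 u2 u3 = id"
    using linear_injective_left_inverse[OF cmap_linear cmap_inj[OF li]] by blast
  define f where "f = (\<lambda>x. cmap w1 w2 w3 (g x))"
  have fe: "f (of_int a *\<^sub>R u1 + of_int b *\<^sub>R u2 + of_int c *\<^sub>R u3)
                      = of_int a *\<^sub>R w1 + of_int b *\<^sub>R w2 + of_int c *\<^sub>R w3" for a b c :: int
  proof -
    have "g (of_int a *\<^sub>R u1 + of_int b *\<^sub>R u2 + of_int c *\<^sub>R u3) = vector [of_int a, of_int b, of_int c]"
      using g(2) cmap_vec[of u1 u2 u3 "of_int a" "of_int b" "of_int c"] by (metis comp_apply id_apply)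
    then show ?thesis unfolding f_def by (simp add: cmap_vec)
  qed
  have liw: "lin_indep3 w1 w2 w3" using fcc_basis unfolding is_basis3_def by simp
  have "inj_on f (int_span3 u1 u2 u3)"
  proof (rule inj_onI)
    fix x y assume "x \<in> int_span3 u1 u2 u3" "y \<in> int_span3 u1 u2 u3" and e: "f x = f y"
    then obtain a b c a' b' c' where x: "x = of_int a *\<^sub>R u1 + of_int b *\<^sub>R u2 + of_int c *\<^sub>R u3"
      and y: "y = of_int a' *\<^sub>R u1 + of_int b' *\<^sub>R u2 + of_int c' *\<^sub>R u3" by (metis span_E)
    have "(of_int a - of_int a') *\<^sub>R w1 + (of_int b - of_int b') *\<^sub>R w2 + (of_int c - of_int c') *\<^sub>R w3 = 0"
      using e unfolding x y fe by (simp add: algebra_simps)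
    from indepD[OF liw this] have "a = a'" "b = b'" "c = c'" by simp_all
    then show "x = y" unfolding x y by simp
  qed
  then show ?thesis using fe that by blast
qed

lemma three_splits:
  assumes bas: "is_basis3 L v1 v2 v3" and mn: "min_norm L 2"
  shows "\<not> (norm (v1+v2) = 2 \<and> norm (v1+v3) = 2 \<and> norm (v2+v3) = 2)"
proof
  assume h: "norm (v1+v2) = 2 \<and> norm (v1+v3) = 2 \<and> norm (v2+v3) = 2"
  have li: "lin_indep3 v1 v2 v3" and L: "L = int_span3 v1 v2 v3" using bas unfolding is_basis3_def by auto
  have ge: "norm (of_int a *\<^sub>R v1 + of_int b *\<^sub>R v2 + of_int c *\<^sub>R v3) \<ge> 2" if "\<not> (a = 0 \<and> b = 0 \<and> c = (0::int))" for a b c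
    using lat_norm_ge[OF mn] span_mem nz_combo[OF li that] L by metis
  have sq4: "\<And>t::real. 2 \<le> t \<Longrightarrow> 4 \<le> t^2" using power_mono[of 2 _ 2] by force
  have "norm v1 \<ge> 2" using ge[of 1 0 0] by simp
  moreover have "norm v2 \<ge> 2" using ge[of 0 1 0] by simp
  moreover have "norm v3 \<ge> 2" using ge[of 0 0 1] by simp
  moreover have "norm (v1+v2+v3) \<ge> 2" using ge[of 1 1 1] by simp
  ultimately have s: "(norm v1)^2 \<ge> 4" "(norm v2)^2 \<ge> 4" "(norm v3)^2 \<ge> 4" "(norm (v1+v2+v3))^2 \<ge> 4"
    using sq4 by blast+
  have t: "(norm (v1+v2))^2 = 4" "(norm (v1+v3))^2 = 4" "(norm (v2+v3))^2 = 4" using h by simp_all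
  show False using s t
    unfolding power2_norm_eq_inner by (simp add: inner_add_left inner_add_right inner_commute)
qed

lemma good_basis:
  assumes lat: "is_lattice3 L" and mn: "min_norm L 2"
  obtains u1 u2 u3 where "is_basis3 L u1 u2 u3"
    "u1 \<bullet> u2 \<le> 0" "u1 \<bullet> u3 \<le> 0" "u2 \<bullet> u3 \<le> 0"
    "(u1+u2+u3) \<bullet> u1 \<ge> 0" "(u1+u2+u3) \<bullet> u2 \<ge> 0" "(u1+u2+u3) \<bullet> u3 \<ge> 0"
    "norm (u2+u3) \<noteq> 2"
proof -
  obtain v1 v2 v3 where b: "is_basis3 L v1 v2 v3" and min: "\<And>u1 u2 u3. is_basis3 L u1 u2 u3 \<Longrightarrow> Phi v1 v2 v3 \<le> Phi u1 u2 u3"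
    using min_basis_exists[OF lat] by blast
  note o = min_obtuse[OF b min]
  have ns: "\<not> (norm (v1+v2) = 2 \<and> norm (v1+v3) = 2 \<and> norm (v2+v3) = 2)" by (rule three_splits[OF b mn])
  have e1: "v2+v1+v3 = v1+v2+v3" "v3+v1+v2 = v1+v2+v3" by (simp_all add: algebra_simps)
  show ?thesis
  proof (cases "norm (v2+v3) = 2")
    case False
    then show ?thesis using that[OF b o] by blast
  next
    case T1: True
    show ?thesis
    proof (cases "norm (v1+v3) = 2")
      case False
      have b': "is_basis3 L v2 v1 v3" by (rule basis_swap12[OF b])
      show ?thesis
        by (rule that[OF b']) (use o False in \<open>simp_all add: inner_commute e1\<close>)
    next
      case True
      then have n12: "norm (v1+v2) \<noteq> 2" using ns T1 by blast
      have b': "is_basis3 L v3 v1 v2" by (rule basis_swap12[OF basis_swap23[OF b]])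
      show ?thesis
        by (rule that[OF b']) (use o n12 in \<open>simp_all add: inner_commute e1\<close>)
    qed
  qed
qed

theorem mainTheorem9:
  fixes L :: "(real^3) set"
  assumes "is_lattice3 L" and "min_norm L 2"
  shows "(\<forall>n::nat. n \<ge> 1 \<longrightarrow> C_lat L n \<le> C_fcc n) \<and>
         (\<exists>v1 v2 v3 w1 w2 w3 (f :: real^3 \<Rightarrow> real^3).
            is_basis3 L v1 v2 v3 \<and> is_basis3 fcc w1 w2 w3 \<and>
            (\<forall>a b c :: int. f (of_int a *\<^sub>R v1 + of_int b *\<^sub>R v2 + of_int c *\<^sub>R v3)
                             = of_int a *\<^sub>R w1 + of_int b *\<^sub>R w2 + of_int c *\<^sub>R w3) \<and>
            (\<forall>x\<in>L. \<forall>y\<in>L. dist x y = 2 \<longrightarrow> dist (f x) (f y) = 2))"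
proof -
  obtain u1 u2 u3 where b: "is_basis3 L u1 u2 u3" and
    o: "u1 \<bullet> u2 \<le> 0" "u1 \<bullet> u3 \<le> 0" "u2 \<bullet> u3 \<le> 0"
    "(u1+u2+u3) \<bullet> u1 \<ge> 0" "(u1+u2+u3) \<bullet> u2 \<ge> 0" "(u1+u2+u3) \<bullet> u3 \<ge> 0"
    and n23: "norm (u2+u3) \<noteq> 2"
    using good_basis[OF assms] by blast
  have li: "lin_indep3 u1 u2 u3" and L: "L = int_span3 u1 u2 u3" using b unfolding is_basis3_def by auto
  obtain f where fe: "\<And>a b c::int. f (of_int a *\<^sub>R u1 + of_int b *\<^sub>R u2 + of_int c *\<^sub>R u3)
                      = of_int a *\<^sub>R w1 + of_int b *\<^sub>R w2 + of_int c *\<^sub>R w3"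
    and inj: "inj_on f (int_span3 u1 u2 u3)" using f_exists[OF li] by blast
  have d: "dist (f x) (f y) = 2" if "x \<in> L" "y \<in> L" "dist x y = 2" for x y
  proof -
    have xs: "x \<in> int_span3 u1 u2 u3" "y \<in> int_span3 u1 u2 u3" using that(1,2) L by simp_all
    obtain a b c where x: "x = of_int a *\<^sub>R u1 + of_int b *\<^sub>R u2 + of_int c *\<^sub>R u3"
      using xs(1) by (rule span_E)
    obtain a' b' c' where y: "y = of_int a' *\<^sub>R u1 + of_int b' *\<^sub>R u2 + of_int c' *\<^sub>R u3"
      using xs(2) by (rule span_E)
    have "x - y = of_int (a-a') *\<^sub>R u1 + of_int (b-b') *\<^sub>R u2 + of_int (c-c') *\<^sub>R u3"
      unfolding x y by (simp add: algebra_simps)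
    then have "norm (of_int (a-a') *\<^sub>R u1 + of_int (b-b') *\<^sub>R u2 + of_int (c-c') *\<^sub>R u3) = 2"
      using that(3) by (simp add: dist_norm)
    then have "norm (of_int (a-a') *\<^sub>R w1 + of_int (b-b') *\<^sub>R w2 + of_int (c-c') *\<^sub>R w3) = 2"
      by (rule keyB[OF b assms(2) o n23])
    moreover have "f x - f y = of_int (a-a') *\<^sub>R w1 + of_int (b-b') *\<^sub>R w2 + of_int (c-c') *\<^sub>R w3"
      unfolding x y fe by (simp add: algebra_simps)
    ultimately show ?thesis by (simp add: dist_norm)
  qed
  have img: "f ` L \<subseteq> fcc"
  proof
    fix z assume "z \<in> f ` L"
    then obtain x where xz: "x \<in> L" "z = f x" by auto
    then have xs: "x \<in> int_span3 u1 u2 u3" using L by simp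
    obtain a b c where x: "x = of_int a *\<^sub>R u1 + of_int b *\<^sub>R u2 + of_int c *\<^sub>R u3"
      using xs by (rule span_E)
    have "z = of_int a *\<^sub>R w1 + of_int b *\<^sub>R w2 + of_int c *\<^sub>R w3" using xz(2) x fe by simp
    then have "z \<in> int_span3 w1 w2 w3" using span_mem[of a w1 b w2 c w3] by simp
    moreover have "int_span3 w1 w2 w3 = fcc" using fcc_basis unfolding is_basis3_def by simp
    ultimately show "z \<in> fcc" by simp
  qed
  have part1: "C_lat L n \<le> C_fcc n" for n
  proof (rule C_mono[OF assms(2) _ _ img d])
    show "inj_on f L" using inj L by simp
    show "\<And>x k. x \<in> L \<Longrightarrow> of_nat k *\<^sub>R x \<in> L" unfolding L by (rule span_nat_mult)
    show "\<And>x y. x \<in> L \<Longrightarrow> y \<in> L \<Longrightarrow> x - y \<in> L" unfolding L by (rule span_diff)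
  qed
  have p2: "is_basis3 L u1 u2 u3 \<and> is_basis3 fcc w1 w2 w3 \<and>
            (\<forall>a b c :: int. f (of_int a *\<^sub>R u1 + of_int b *\<^sub>R u2 + of_int c *\<^sub>R u3)
                             = of_int a *\<^sub>R w1 + of_int b *\<^sub>R w2 + of_int c *\<^sub>R w3) \<and>
            (\<forall>x\<in>L. \<forall>y\<in>L. dist x y = 2 \<longrightarrow> dist (f x) (f y) = 2)"
    using b fcc_basis fe d by simp
  show ?thesis
  proof (rule conjI)
    show "\<forall>n::nat. n \<ge> 1 \<longrightarrow> C_lat L n \<le> C_fcc n" using part1 by simp
    show "\<exists>v1 v2 v3 w1 w2 w3 (f :: real^3 \<Rightarrow> real^3).
            is_basis3 L v1 v2 v3 \<and> is_basis3 fcc w1 w2 w3 \<and>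
            (\<forall>a b c :: int. f (of_int a *\<^sub>R v1 + of_int b *\<^sub>R v2 + of_int c *\<^sub>R v3)
                             = of_int a *\<^sub>R w1 + of_int b *\<^sub>R w2 + of_int c *\<^sub>R w3) \<and>
            (\<forall>x\<in>L. \<forall>y\<in>L. dist x y = 2 \<longrightarrow> dist (f x) (f y) = 2)"
      using p2 by (intro exI) assumption
  qed
qed

end
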